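(* Let $G=(V,E)$ be a graph on $n$ vertices with adjacency matrix $A_G$, let $\{e_v : v\in V\}$ be the standard basis of $\mathbb{C}^n$, and let $\{P_v\}_{v\in V}$ be a $d/r$-representation of $G$. Let $\Gamma$ be a random unitary matrix sampled from the Haar measure on $\mathrm{U}(d)$ and define $$Q = \sum_{v \in V} e_v e_v^* \otimes \Gamma^* P_v \Gamma \in \mathbb{C}^{n\times n}\otimes \mathbb{C}^{d\times d}.$$ Then $Q$ is a stochastic block decomposition of size $d/r$, and $Q(A_G\otimes I_d)Q = O$ (for every value of $\Gamma$).
   Context: A $d/r$-representation of $G$ is a family of rank-$r$ orthogonal projectors $P_v \in \mathbb{C}^{d\times d}$, $v \in V$, with $P_vP_w = O$ for every edge $vw$. $\mathrm{U}(d)$ is the group of $d\times d$ complex unitary matrices and the Haar measure is its unique left- and right-invariant probability measure. A stochastic block decomposition of size $\alpha$ is a random variable $Q$ defined on a probability space taking values in the set of orthogonal projection matrices in $\mathbb{C}^{N\times N}$ (for some $N$) such that the entrywise expectation satisfies $\mathbb{E}[Q] = \alpha^{-1} I$. *)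

theory Defs
  imports "HOL-Analysis.Analysis" "HOL-Probability.Probability"
begin

definition adj :: "complex^'n^'m \<Rightarrow> complex^'m^'n" where
  "adj A = (\<chi> i j. cnj (A $ j $ i))"

definition unitary :: "complex^'n^'n \<Rightarrow> bool" where
  "unitary U \<longleftrightarrow> adj U ** U = mat 1 \<and> U ** adj U = mat 1"

definition unitary_group :: "(complex^'n^'n) set" where
  "unitary_group = {U. unitary U}"

definition orth_proj :: "complex^'n^'n \<Rightarrow> bool" where
  "orth_proj P \<longleftrightarrow> adj P = P \<and> P ** P = P"

definition kron :: "complex^'n^'m \<Rightarrow> complex^'q^'p \<Rightarrow> complex^('n \<times> 'q)^('m \<times> 'p)" where
  "kron A B = (\<chi> p q. A $ fst p $ fst q * B $ snd p $ snd q)"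

definition basis_proj :: "'v \<Rightarrow> complex^'v^'v" where
  "basis_proj v = (\<chi> i j. if i = v \<and> j = v then 1 else 0)"

definition simple_graph :: "('v \<Rightarrow> 'v \<Rightarrow> bool) \<Rightarrow> bool" where
  "simple_graph E \<longleftrightarrow> (\<forall>v w. E v w \<longrightarrow> E w v) \<and> (\<forall>v. \<not> E v v)"

definition adjacency_matrix :: "('v \<Rightarrow> 'v \<Rightarrow> bool) \<Rightarrow> complex^'v^'v" where
  "adjacency_matrix E = (\<chi> v w. if E v w then 1 else 0)"

definition dr_representation ::
  "('v \<Rightarrow> 'v \<Rightarrow> bool) \<Rightarrow> nat \<Rightarrow> ('v \<Rightarrow> complex^'d^'d) \<Rightarrow> bool" where
  "dr_representation E r P \<longleftrightarrow>
     (\<forall>v. orth_proj (P v) \<and> rank (P v) = r) \<and>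
     (\<forall>v w. E v w \<longrightarrow> P v ** P w = 0)"

definition haar_unitary :: "(complex^'d^'d) measure \<Rightarrow> bool" where
  "haar_unitary M \<longleftrightarrow>
     prob_space M \<and>
     sets M = sets (restrict_space borel unitary_group) \<and>
     (\<forall>V \<in> unitary_group. \<forall>A \<in> sets M.
        emeasure M ((\<lambda>U. V ** U) -` A \<inter> space M) = emeasure M A \<and>
        emeasure M ((\<lambda>U. U ** V) -` A \<inter> space M) = emeasure M A)"

definition stochastic_block_decomposition ::
  "'s measure \<Rightarrow> ('s \<Rightarrow> complex^'N^'N) \<Rightarrow> real \<Rightarrow> bool" where
  "stochastic_block_decomposition M Q \<alpha> \<longleftrightarrow>
     prob_space M \<and>
     Q \<in> borel_measurable M \<and>
     (\<forall>x \<in> space M. orth_proj (Q x)) \<and>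
     (\<forall>i j. integrable M (\<lambda>x. Q x $ i $ j) \<and>
            (LINT x|M. Q x $ i $ j) = (if i = j then complex_of_real (inverse \<alpha>) else 0))"

end

theory Submission
  imports Defs
begin


lemma trace_idem_rank:
  fixes A :: "complex^'n^'n"
  assumes idem: "A ** A = A"
  shows "trace A = of_nat (rank A)"
proof -
  obtain B where B: "B \<subseteq> rows A" "vec.independent B" "rows A \<subseteq> vec.span B" "card B = vec.dim (rows A)"
    using vec.basis_exists by blast
  have "rows A = range (\<lambda>i. row i A)" by (auto simp: rows_def)
  then have finB: "finite B" using B(1) finite_subset[of B "rows A"] by auto
  define c where "c i b = vec.representation B (row i A) b" for i b
  have rowspan: "row i A \<in> vec.span B" for i using B(3) by (auto simp: rows_def)
  have rowexp: "row i A = (\<Sum>b\<in>B. c i b *s b)" for i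
    unfolding c_def using vec.sum_representation_eq[OF B(2) rowspan finB] by simp
  have delta: "(\<Sum>i\<in>UNIV. b$i * c i b') = (if b' = b then 1 else 0)" if b: "b \<in> B" for b b'
  proof -
    from b B(1) obtain k where bk: "b = row k A" by (auto simp: rows_def)
    have fixb: "(\<Sum>i\<in>UNIV. b$i *s row i A) = b"
    proof -
      have "(\<Sum>i\<in>UNIV. (row k A)$i *s row i A) = row k (A ** A)"
        by (simp add: vec_eq_iff row_def matrix_matrix_mult_def sum_component)
      then show ?thesis using idem bk by simp
    qed
    have "vec.representation B (\<Sum>i\<in>UNIV. b$i *s row i A) b' = (\<Sum>i\<in>UNIV. b$i * c i b')"
      by (subst vec.representation_sum[OF B(2)])
         (auto intro: vec.span_scale rowspan simp: vec.representation_scale[OF B(2) rowspan] c_def)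
    then show ?thesis using fixb vec.representation_basis[OF B(2) b] by simp
  qed
  have "trace A = (\<Sum>i\<in>UNIV. (row i A)$i)" by (simp add: trace_def row_def)
  also have "\<dots> = (\<Sum>i\<in>UNIV. \<Sum>b\<in>B. c i b * b$i)"
    by (subst rowexp) (simp add: sum_component)
  also have "\<dots> = (\<Sum>b\<in>B. \<Sum>i\<in>UNIV. b$i * c i b)"
    by (subst sum.swap) (simp add: mult.commute)
  also have "\<dots> = (\<Sum>b\<in>B. 1)" by (intro sum.cong refl) (simp add: delta)
  also have "\<dots> = of_nat (rank A)" using B(4) by (simp add: row_rank_def_gen)
  finally show ?thesis .
qed


lemma sum_pair_UNIV: "(\<Sum>p\<in>(UNIV::('a::finite\<times>'b::finite) set). f p) = (\<Sum>a\<in>UNIV. \<Sum>b\<in>UNIV. f (a,b))"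
  by (simp add: sum.cartesian_product UNIV_Times_UNIV[symmetric] del: UNIV_Times_UNIV)

lemma sum_delta2: "(\<Sum>x\<in>(UNIV::'a::finite set). if a = x \<and> b = x then f x else 0) = (if a = b then (f a::'b::comm_monoid_add) else 0)"
  by (cases "a = b") (auto simp: sum.neutral)

lemma sum_if_P: "(\<Sum>x\<in>S. if P then f x else 0) = (if P then sum f S else (0::'b::comm_monoid_add))"
  by auto

definition bd :: "('v::finite \<Rightarrow> complex^'d::finite^'d) \<Rightarrow> complex^('v\<times>'d)^('v\<times>'d)" where
  "bd B = (\<chi> p q. if fst p = fst q then B (fst p) $ snd p $ snd q else 0)"

lemma Q_bd: "(\<Sum>v\<in>UNIV. kron (basis_proj v) (B v)) = bd B"
  apply (simp add: vec_eq_iff sum_component kron_def basis_proj_def bd_def)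
  apply (simp add: if_distrib[of "\<lambda>x. x * _"] sum_delta2 sum_if_P cong: if_cong)
  done

lemma bd_mult: "bd B ** bd C = bd (\<lambda>v. B v ** C v)"
  apply (simp add: vec_eq_iff matrix_matrix_mult_def bd_def sum_pair_UNIV)
  apply (simp add: if_distrib[of "\<lambda>x. x * _"] if_distrib[of "\<lambda>x. _ * x"] sum_if_P cong: if_cong)
  done

lemma bd_kron_bd: "bd B ** kron A (mat 1) ** bd C = (\<chi> p q. A$fst p$fst q * (B (fst p) ** C (fst q)) $ snd p $ snd q)"
proof -
  have 1: "bd B ** kron A (mat 1) = (\<chi> p t. B (fst p) $ snd p $ snd t * A $ fst p $ fst t)"
    apply (simp add: vec_eq_iff matrix_matrix_mult_def bd_def sum_pair_UNIV kron_def mat_def)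
    apply (simp add: if_distrib[of "\<lambda>x. x * _"] if_distrib[of "\<lambda>x. _ * x"] sum_if_P cong: if_cong)
    done
  show ?thesis unfolding 1
    apply (simp add: vec_eq_iff matrix_matrix_mult_def bd_def sum_pair_UNIV)
    apply (simp add: if_distrib[of "\<lambda>x. x * _"] if_distrib[of "\<lambda>x. _ * x"] sum_distrib_left mult_ac sum_if_P cong: if_cong)
    done
qed

lemma adj_bd: "adj (bd B) = bd (\<lambda>v. adj (B v))"
  by (auto simp: vec_eq_iff adj_def bd_def)

lemma adj_mult: "adj (A ** B) = adj B ** adj A"
  by (auto simp: vec_eq_iff adj_def matrix_matrix_mult_def mult.commute)

lemma adj_adj[simp]: "adj (adj A) = A"
  by (auto simp: vec_eq_iff adj_def)



definition mono_mat :: "('d::finite \<Rightarrow> 'd) \<Rightarrow> ('d \<Rightarrow> complex) \<Rightarrow> complex^'d^'d" where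
  "mono_mat \<tau> s = (\<chi> i j. if j = \<tau> i then s i else 0)"

lemma sum_inv_delta:
  assumes inv: "\<And>x. \<tau> (\<tau> x) = x"
  shows "(\<Sum>k\<in>(UNIV::'d::finite set). if i = \<tau> k then g k else 0) = (g (\<tau> i) :: 'b::comm_monoid_add)"
proof -
  have "(\<Sum>k\<in>(UNIV::'d set). if i = \<tau> k then g k else 0) = (\<Sum>k\<in>UNIV. if k = \<tau> i then g k else 0)"
    by (intro sum.cong refl) (metis inv)
  then show ?thesis by simp
qed

lemma mono_mat_unitary:
  assumes inv: "\<And>x. \<tau> (\<tau> x) = x" and s: "\<And>i. cnj (s i) * s i = 1"
  shows "unitary (mono_mat \<tau> s)"
proof -
  have s': "s i * cnj (s i) = 1" for i using s[of i] by (simp add: mult.commute)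
  have a: "adj (mono_mat \<tau> s) ** mono_mat \<tau> s = mat 1"
    apply (simp add: vec_eq_iff matrix_matrix_mult_def adj_def mono_mat_def mat_def)
    apply (simp add: if_distrib[of "\<lambda>x. x * _"] if_distrib[of "\<lambda>x. _ * x"] if_distrib[of cnj] sum_inv_delta[OF inv] s cong: if_cong)
    by (metis inv)
  have b: "mono_mat \<tau> s ** adj (mono_mat \<tau> s) = mat 1"
    apply (simp add: vec_eq_iff matrix_matrix_mult_def adj_def mono_mat_def mat_def)
    apply (simp add: if_distrib[of "\<lambda>x. x * _"] if_distrib[of "\<lambda>x. _ * x"] if_distrib[of cnj] s' cong: if_cong)
    by (metis inv)
  show ?thesis using a b by (simp add: unitary_def)
qed

lemma mono_mat_conj:
  assumes inv: "\<And>x. \<tau> (\<tau> x) = x"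
  shows "(adj (mono_mat \<tau> s) ** X ** mono_mat \<tau> s) $ i $ j = cnj (s (\<tau> i)) * X $ \<tau> i $ \<tau> j * s (\<tau> j)"
proof -
  have "adj (mono_mat \<tau> s) ** X = (\<chi> i l. cnj (s (\<tau> i)) * X $ \<tau> i $ l)"
    apply (simp add: vec_eq_iff matrix_matrix_mult_def adj_def mono_mat_def)
    apply (simp add: if_distrib[of "\<lambda>x. x * _"] if_distrib[of cnj] sum_inv_delta[OF inv] cong: if_cong)
    done
  then show ?thesis
    apply (simp add: matrix_matrix_mult_def mono_mat_def)
    apply (simp add: if_distrib[of "\<lambda>x. _ * x"] sum_inv_delta[OF inv] cong: if_cong)
    done
qed

lemma scalar_from_invariance:
  fixes X :: "complex^'d::finite^'d"
  assumes inv: "\<And>V. unitary V \<Longrightarrow> adj V ** X ** V = X"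
  shows "X $ i $ j = (if i = j then X $ k $ k else 0)"
proof (cases "i = j")
  case True
  define \<tau> where "\<tau> x = (if x = i then k else if x = k then i else x)" for x
  have tinv: "\<tau> (\<tau> x) = x" for x by (auto simp: \<tau>_def)
  have "X $ i $ i = (adj (mono_mat \<tau> (\<lambda>_. 1)) ** X ** mono_mat \<tau> (\<lambda>_. 1)) $ i $ i"
    using inv[OF mono_mat_unitary[OF tinv]] by simp
  also have "\<dots> = X $ k $ k" by (simp add: mono_mat_conj[OF tinv] \<tau>_def)
  finally show ?thesis using True by simp
next
  case False
  define s where "s x = (if x = i then -1 else 1 :: complex)" for x
  have "X $ i $ j = (adj (mono_mat id s) ** X ** mono_mat id s) $ i $ j"
    using inv[OF mono_mat_unitary[of id s]] by (simp add: s_def)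
  also have "\<dots> = - X $ i $ j" using False by (simp add: mono_mat_conj s_def)
  finally show ?thesis using False by simp
qed



lemma continuous_on_vec_nth'[continuous_intros]:
  "continuous_on S f \<Longrightarrow> continuous_on S (\<lambda>x. f x $ i)"
  unfolding continuous_on_def by (auto intro: tendsto_vec_nth)

lemma cont_mult_right: "continuous_on S (\<lambda>U::complex^'d::finite^'d. U ** V)"
  unfolding matrix_matrix_mult_def by (intro continuous_intros)

lemma haar_space: "haar_unitary M \<Longrightarrow> space M = unitary_group"
  unfolding haar_unitary_def by (metis sets_eq_imp_space_eq space_restrict_space space_borel inf_top_right)

lemma haar_meas:
  assumes "haar_unitary M" "continuous_on UNIV f"
  shows "f \<in> borel_measurable M"
proof -
  have "f \<in> borel_measurable (restrict_space borel unitary_group)"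
    by (rule measurable_restrict_space1[OF borel_measurable_continuous_onI[OF assms(2)]])
  then show ?thesis using assms(1) unfolding haar_unitary_def
    using measurable_cong_sets by blast
qed

lemma unitary_mult: "unitary U \<Longrightarrow> unitary V \<Longrightarrow> unitary (U ** V)"
  unfolding unitary_def adj_mult
  by (metis matrix_mul_assoc matrix_mul_lid)

lemma haar_right:
  fixes f :: "complex^'d::finite^'d \<Rightarrow> 'b::{banach,second_countable_topology}"
  assumes h: "haar_unitary M" and V: "unitary V" and f: "f \<in> borel_measurable M"
  shows "(LINT U|M. f (U ** V)) = (LINT U|M. f U)"
proof -
  have sM: "sets M = sets (restrict_space borel unitary_group)" using h by (simp add: haar_unitary_def)
  have "(\<lambda>U. U ** V) \<in> measurable (restrict_space borel unitary_group) (restrict_space borel unitary_group)"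
    by (rule measurable_restrict_space3[OF borel_measurable_continuous_onI[OF cont_mult_right]])
       (use V in \<open>auto simp: unitary_group_def unitary_mult\<close>)
  then have T: "(\<lambda>U. U ** V) \<in> measurable M M" using sM measurable_cong_sets by blast
  have "distr M M (\<lambda>U. U ** V) = M"
  proof (rule measure_eqI)
    show "sets (distr M M (\<lambda>U. U ** V)) = sets M" by simp
    fix A assume "A \<in> sets (distr M M (\<lambda>U. U ** V))"
    then have A: "A \<in> sets M" by simp
    show "emeasure (distr M M (\<lambda>U. U ** V)) A = emeasure M A"
      using emeasure_distr[OF T A] h V A by (simp add: haar_unitary_def unitary_group_def)
  qed
  then show ?thesis using integral_distr[OF T f] by simp
qed



lemma conj_entry: "(adj V ** Y ** V) $ i $ j = (\<Sum>k\<in>UNIV. \<Sum>l\<in>UNIV. cnj (V$k$i) * Y$k$l * V$l$j)"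
  apply (simp add: matrix_matrix_mult_def adj_def sum_distrib_right)
  apply (subst sum.swap) apply simp
  done

lemma cont_entry: "continuous_on UNIV (\<lambda>\<Gamma>::complex^'d::finite^'d. (adj \<Gamma> ** P ** \<Gamma>) $ i $ j)"
  unfolding conj_entry by (intro continuous_intros)

lemma unitary_entry_le:
  fixes U :: "complex^'d::finite^'d"
  assumes "unitary U" shows "norm (U$k$i) \<le> 1"
proof -
  have "(adj U ** U) $ i $ i = 1" using assms by (simp add: unitary_def mat_def)
  then have "(\<Sum>m\<in>UNIV. cnj (U$m$i) * U$m$i) = 1" by (simp add: matrix_matrix_mult_def adj_def)
  moreover have "cnj z * z = complex_of_real ((norm z)\<^sup>2)" for z :: complex
    by (metis complex_norm_square mult.commute)
  ultimately have "(\<Sum>m\<in>UNIV. complex_of_real ((norm (U$m$i))\<^sup>2)) = 1"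
    by simp
  then have s: "(\<Sum>m\<in>UNIV. (norm (U$m$i))\<^sup>2) = 1"
    by (metis of_real_eq_1_iff of_real_sum)
  have "(norm (U$k$i))\<^sup>2 \<le> (\<Sum>m\<in>UNIV. (norm (U$m$i))\<^sup>2)"
    by (rule member_le_sum) auto
  then have "(norm (U$k$i))\<^sup>2 \<le> 1" using s by simp
  then show ?thesis by (simp add: power_le_one_iff abs_square_le_1)
qed

lemma entry_bound:
  fixes \<Gamma> :: "complex^'d::finite^'d"
  assumes "unitary \<Gamma>"
  shows "norm ((adj \<Gamma> ** P ** \<Gamma>) $ i $ j) \<le> (\<Sum>k\<in>UNIV. \<Sum>l\<in>UNIV. norm (P$k$l))"
proof -
  have "norm ((adj \<Gamma> ** P ** \<Gamma>) $ i $ j) \<le> (\<Sum>k\<in>UNIV. norm (\<Sum>l\<in>UNIV. cnj (\<Gamma>$k$i) * P$k$l * \<Gamma>$l$j))"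
    unfolding conj_entry by (rule norm_sum)
  also have "\<dots> \<le> (\<Sum>k\<in>UNIV. \<Sum>l\<in>UNIV. norm (cnj (\<Gamma>$k$i) * P$k$l * \<Gamma>$l$j))"
    by (intro sum_mono norm_sum)
  also have "\<dots> \<le> (\<Sum>k\<in>UNIV. \<Sum>l\<in>UNIV. norm (P$k$l))"
  proof (intro sum_mono)
    fix k l
    have "norm (cnj (\<Gamma>$k$i) * P$k$l * \<Gamma>$l$j) = norm (\<Gamma>$k$i) * norm (P$k$l) * norm (\<Gamma>$l$j)"
      by (simp add: norm_mult)
    also have "\<dots> \<le> 1 * norm (P$k$l) * 1"
      using unitary_entry_le[OF assms]
      by (intro mult_mono) (auto simp: mult_le_one)
    finally show "norm (cnj (\<Gamma>$k$i) * P$k$l * \<Gamma>$l$j) \<le> norm (P$k$l)" by simp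
  qed
  finally show ?thesis .
qed

lemma integrable_entry:
  fixes M :: "(complex^'d::finite^'d) measure"
  assumes h: "haar_unitary M"
  shows "integrable M (\<lambda>\<Gamma>. (adj \<Gamma> ** P ** \<Gamma>) $ i $ j)"
proof -
  interpret prob_space M using h by (simp add: haar_unitary_def)
  show ?thesis
  proof (rule integrable_const_bound)
    show "AE x in M. norm ((adj x ** P ** x) $ i $ j) \<le> (\<Sum>k\<in>UNIV. \<Sum>l\<in>UNIV. norm (P$k$l))"
      using haar_space[OF h] entry_bound by (intro AE_I2) (auto simp: unitary_group_def)
    show "(\<lambda>\<Gamma>. (adj \<Gamma> ** P ** \<Gamma>) $ i $ j) \<in> borel_measurable M"
      by (rule haar_meas[OF h cont_entry])
  qed
qed

lemma conj_mult: "adj (\<Gamma> ** V) ** P ** (\<Gamma> ** V) = adj V ** (adj \<Gamma> ** P ** \<Gamma>) ** V"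
  unfolding adj_mult by (metis matrix_mul_assoc)

lemma trace_conj:
  fixes \<Gamma> :: "complex^'d::finite^'d"
  assumes "unitary \<Gamma>" shows "trace (adj \<Gamma> ** P ** \<Gamma>) = trace P"
proof -
  have "trace (adj \<Gamma> ** P ** \<Gamma>) = trace (\<Gamma> ** (adj \<Gamma> ** P))" by (rule trace_mul_sym)
  also have "\<dots> = trace ((\<Gamma> ** adj \<Gamma>) ** P)" by (simp only: matrix_mul_assoc)
  also have "\<dots> = trace P" using assms by (simp add: unitary_def)
  finally show ?thesis .
qed



lemma expectation:
  fixes M :: "(complex^'d::finite^'d) measure" and P :: "complex^'d^'d"
  assumes h: "haar_unitary M" and idem: "P ** P = P"
  shows "(LINT \<Gamma>|M. (adj \<Gamma> ** P ** \<Gamma>) $ i $ j) = (if i = j then of_nat (rank P) / of_nat CARD('d) else 0)"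
proof -
  interpret prob_space M using h by (simp add: haar_unitary_def)
  define X where "X = (\<chi> i j. LINT \<Gamma>|M. (adj \<Gamma> ** P ** \<Gamma>) $ i $ j)"
  have Xe: "X $ i $ j = (LINT \<Gamma>|M. (adj \<Gamma> ** P ** \<Gamma>) $ i $ j)" for i j
    unfolding X_def by simp
  have inv: "adj V ** X ** V = X" if V: "unitary V" for V
  proof -
    have "(adj V ** X ** V) $ i $ j = X $ i $ j" for i j
    proof -
      have "(adj V ** X ** V) $ i $ j = (\<Sum>k\<in>UNIV. \<Sum>l\<in>UNIV. cnj (V$k$i) * X $ k $ l * V$l$j)"
        by (rule conj_entry)
      also have "\<dots> = (\<Sum>k\<in>UNIV. \<Sum>l\<in>UNIV. LINT \<Gamma>|M. cnj (V$k$i) * (adj \<Gamma> ** P ** \<Gamma>) $ k $ l * V$l$j)"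
        by (simp only: Xe integral_mult_left_zero integral_mult_right_zero)
      also have "\<dots> = (\<Sum>k\<in>UNIV. LINT \<Gamma>|M. (\<Sum>l\<in>UNIV. cnj (V$k$i) * (adj \<Gamma> ** P ** \<Gamma>) $ k $ l * V$l$j))"
        apply (rule sum.cong[OF refl], rule Bochner_Integration.integral_sum[symmetric])
        apply (rule Bochner_Integration.integrable_mult_left, rule Bochner_Integration.integrable_mult_right, rule integrable_entry[OF h])
        done
      also have "\<dots> = (LINT \<Gamma>|M. (\<Sum>k\<in>UNIV. \<Sum>l\<in>UNIV. cnj (V$k$i) * (adj \<Gamma> ** P ** \<Gamma>) $ k $ l * V$l$j))"
        apply (rule Bochner_Integration.integral_sum[symmetric])
        by (intro Bochner_Integration.integrable_sum Bochner_Integration.integrable_mult_left Bochner_Integration.integrable_mult_right integrable_entry[OF h])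
      also have "\<dots> = (LINT \<Gamma>|M. (adj V ** (adj \<Gamma> ** P ** \<Gamma>) ** V) $ i $ j)"
        by (rule arg_cong[where f="integral\<^sup>L M"], rule ext, rule conj_entry[symmetric])
      also have "\<dots> = (LINT \<Gamma>|M. (adj (\<Gamma> ** V) ** P ** (\<Gamma> ** V)) $ i $ j)"
        by (simp only: conj_mult)
      also have "\<dots> = X $ i $ j"
        unfolding Xe by (rule haar_right[OF h V haar_meas[OF h cont_entry]])
      finally show ?thesis .
    qed
    then show ?thesis by (simp add: vec_eq_iff)
  qed
  have sc: "X $ i $ j = (if i = j then X $ k $ k else 0)" for i j k
    by (rule scalar_from_invariance[OF inv])
  have "trace X = (\<Sum>m\<in>UNIV. LINT \<Gamma>|M. (adj \<Gamma> ** P ** \<Gamma>) $ m $ m)"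
    unfolding trace_def Xe ..
  also have "\<dots> = (LINT \<Gamma>|M. trace (adj \<Gamma> ** P ** \<Gamma>))"
    unfolding trace_def
    by (rule Bochner_Integration.integral_sum[symmetric], rule integrable_entry[OF h])
  also have "\<dots> = (LINT \<Gamma>|M. trace P)"
    by (rule Bochner_Integration.integral_cong[OF refl]) (use haar_space[OF h] trace_conj in \<open>auto simp: unitary_group_def\<close>)
  also have "\<dots> = trace P" by (simp add: prob_space)
  also have "\<dots> = of_nat (rank P)" by (rule trace_idem_rank[OF idem])
  finally have tr: "trace X = of_nat (rank P)" .
  have diag: "X $ m $ m = X $ i $ i" for m using sc[of m m i] by simp
  have "trace X = (\<Sum>m::'d\<in>UNIV. X $ i $ i)"
    unfolding trace_def by (intro sum.cong refl diag)
  then have "trace X = of_nat CARD('d) * X $ i $ i" by simp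
  then have Xii: "X $ i $ i = of_nat (rank P) / of_nat CARD('d)" using tr
    by (simp add: field_simps)
  show ?thesis
  proof (cases "i = j")
    case True then show ?thesis using Xii Xe by simp
  next
    case False then show ?thesis using sc[of i j i] Xe by simp
  qed
qed



lemma continuous_on_if_const:
  "continuous_on S f \<Longrightarrow> continuous_on S g \<Longrightarrow> continuous_on S (\<lambda>x. if c then f x else g x)"
  by (cases c) auto

lemma conj_idem:
  fixes \<Gamma> :: "complex^'d::finite^'d"
  assumes "unitary \<Gamma>"
  shows "(adj \<Gamma> ** A ** \<Gamma>) ** (adj \<Gamma> ** B ** \<Gamma>) = adj \<Gamma> ** (A ** B) ** \<Gamma>"
proof -
  have "(adj \<Gamma> ** A ** \<Gamma>) ** (adj \<Gamma> ** B ** \<Gamma>) = adj \<Gamma> ** A ** (\<Gamma> ** adj \<Gamma>) ** B ** \<Gamma>"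
    by (simp only: matrix_mul_assoc)
  also have "\<dots> = adj \<Gamma> ** (A ** B) ** \<Gamma>" using assms
    by (simp add: unitary_def matrix_mul_assoc)
  finally show ?thesis .
qed

theorem lemma2p4:
  fixes E :: "'v::finite \<Rightarrow> 'v \<Rightarrow> bool"
    and P :: "'v \<Rightarrow> complex^'d::finite^'d"
    and r :: nat
    and M :: "(complex^'d^'d) measure"
  assumes "simple_graph E"
    and "dr_representation E r P"
    and "haar_unitary M"
  defines "Q \<equiv> (\<lambda>\<Gamma>. \<Sum>v\<in>UNIV. kron (basis_proj v) (adj \<Gamma> ** P v ** \<Gamma>))"
  shows "stochastic_block_decomposition M Q (real CARD('d) / real r)
     \<and> (\<forall>\<Gamma> \<in> space M.
          Q \<Gamma> ** kron (adjacency_matrix E) (mat 1 :: complex^'d^'d) ** Q \<Gamma> = 0)"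
proof -
  note h = assms(3)
  interpret prob_space M using h by (simp add: haar_unitary_def)
  have Pv: "adj (P v) = P v" "P v ** P v = P v" "rank (P v) = r" for v
    using assms(2) by (auto simp: dr_representation_def orth_proj_def)
  have PE: "E v w \<Longrightarrow> P v ** P w = 0" for v w
    using assms(2) by (auto simp: dr_representation_def)
  have Qbd: "Q \<Gamma> = bd (\<lambda>v. adj \<Gamma> ** P v ** \<Gamma>)" for \<Gamma>
    unfolding Q_def by (rule Q_bd)
  have Qe: "Q \<Gamma> $ p $ q = (if fst p = fst q then (adj \<Gamma> ** P (fst p) ** \<Gamma>) $ snd p $ snd q else 0)" for \<Gamma> p q
    unfolding Qbd bd_def by simp
  have unit: "unitary \<Gamma>" if "\<Gamma> \<in> space M" for \<Gamma>
    using that haar_space[OF h] by (simp add: unitary_group_def)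
  have meas: "Q \<in> borel_measurable M"
  proof (rule haar_meas[OF h])
    have "Q = (\<lambda>\<Gamma>. \<chi> p q. if fst p = fst q then (adj \<Gamma> ** P (fst p) ** \<Gamma>) $ snd p $ snd q else 0)"
      by (simp add: fun_eq_iff vec_eq_iff Qe)
    then show "continuous_on UNIV Q"
      by (simp only:) (intro continuous_on_vec_lambda continuous_on_if_const cont_entry continuous_on_const)
  qed
  have orth: "orth_proj (Q \<Gamma>)" if "\<Gamma> \<in> space M" for \<Gamma>
  proof -
    have u: "unitary \<Gamma>" using unit[OF that] .
    have "adj (Q \<Gamma>) = Q \<Gamma>"
      unfolding Qbd adj_bd by (simp add: adj_mult Pv matrix_mul_assoc)
    moreover have "Q \<Gamma> ** Q \<Gamma> = Q \<Gamma>"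
      unfolding Qbd bd_mult conj_idem[OF u] Pv ..
    ultimately show ?thesis by (simp add: orth_proj_def)
  qed
  have integ: "integrable M (\<lambda>x. Q x $ p $ q)" for p q
    unfolding Qe by (cases "fst p = fst q") (simp_all add: integrable_entry[OF h])
  have intg: "(LINT x|M. Q x $ p $ q) = (if p = q then complex_of_real (inverse (real CARD('d) / real r)) else 0)" for p q
  proof (cases "fst p = fst q")
    case True
    have "(LINT x|M. Q x $ p $ q) = (LINT x|M. (adj x ** P (fst p) ** x) $ snd p $ snd q)"
      unfolding Qe using True by simp
    also have "\<dots> = (if snd p = snd q then of_nat r / of_nat CARD('d) else 0)"
      using expectation[OF h Pv(2)] Pv(3) by simp
    finally show ?thesis using True by (cases p, cases q) auto
  next
    case False
    then have "p \<noteq> q" by auto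
    then show ?thesis unfolding Qe using False by simp
  qed
  have sbd: "stochastic_block_decomposition M Q (real CARD('d) / real r)"
    unfolding stochastic_block_decomposition_def
    using prob_space_axioms meas orth integ intg by blast
  have zero: "Q \<Gamma> ** kron (adjacency_matrix E) (mat 1 :: complex^'d^'d) ** Q \<Gamma> = 0" if "\<Gamma> \<in> space M" for \<Gamma>
  proof -
    have u: "unitary \<Gamma>" using unit[OF that] .
    show ?thesis
      unfolding Qbd bd_kron_bd conj_idem[OF u]
      by (auto simp: vec_eq_iff adjacency_matrix_def PE)
  qed
  show ?thesis using sbd zero by blast
qed

end
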